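(* For $n\in\{0,1,\dots\}$ and $b,s\in\{0,\dots,n\}$, the diagonal matrix $\Gamma_{n,b,s}$ satisfies $$\Gamma_{n,b,s}=\mathrm{diag}(\lambda_{n,a_1,s},\dots,\lambda_{n,a_{2^b},s}).$$ In particular, for $b\ge1$, with $\mathbf{0}_{2^{b-1}}$ the zero vector of length $2^{b-1}$, $$\Gamma_{n,b,s}=\mathrm{diag}(\lambda_{n,a_1,s},\dots,\lambda_{n,a_{2^{b-1}},s},\mathbf{0}_{2^{b-1}})+\mathrm{diag}(\mathbf{0}_{2^{b-1}},\lambda_{n,a_1+1,s},\dots,\lambda_{n,a_{2^{b-1}}+1,s}).$$
   Context: With $(n)_t=n(n-1)\cdots(n-t+1)$ (empty product $1$), $\lambda_{n,b,s}=\sum_{t=0}^b\binom bt(-2)^t\frac{(s)_t}{(n)_t}$. Let $\Gamma=\mathrm{diag}(1,-1)$ and $I_2$ the $2\times2$ identity. The $2^b\times2^b$ matrices $\Gamma_{n,b,s}$ are defined by $\Gamma_{n,0,s}=1$ and, for $b\in\{1,\dots,n\}$, $\Gamma_{n,b,s}=\frac sn(\Gamma\otimes\Gamma_{n-1,b-1,s-1})+(1-\frac sn)(I_2\otimes\Gamma_{n-1,b-1,s})$ (terms with coefficient zero are omitted). The vectors $\mathbf{a}_b$ of length $2^b$ are defined by $\mathbf{a}_1=(0,1)$ and $\mathbf{a}_b=(\mathbf{a}_{b-1},\mathbf{a}_{b-1}+\mathbf{1}_{b-1})$ for $b\ge2$, where $\mathbf{1}_{b-1}$ is the all-ones vector of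 length $2^{b-1}$ (e.g. $\mathbf{a}_2=(0,1,1,2)$, $\mathbf{a}_3=(0,1,1,2,1,2,2,3)$); $a_k$ denotes the $k$-th entry of $\mathbf{a}_b$ for any $b$ with $2^b\ge k$ (this is well defined), and $a_1=0$. *)

theory Defs
  imports "Jordan_Normal_Form.Matrix"
begin

definition falling :: "nat \<Rightarrow> nat \<Rightarrow> real" where
  "falling n t = (\<Prod>i<t. (real n - real i))"

definition lam :: "nat \<Rightarrow> nat \<Rightarrow> nat \<Rightarrow> real" where
  "lam n b s = (\<Sum>t=0..b. real (b choose t) * (-2) ^ t * (falling s t / falling n t))"

definition kron :: "real mat \<Rightarrow> real mat \<Rightarrow> real mat" where
  "kron A B = mat (dim_row A * dim_row B) (dim_col A * dim_col B)
     (\<lambda>(i, j). A $$ (i div dim_row B, j div dim_col B) * B $$ (i mod dim_row B, j mod dim_col B))"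

definition GammaM :: "real mat" where
  "GammaM = mat 2 2 (\<lambda>(i, j). if i = j then (if i = 0 then 1 else -1) else 0)"

text \<open>Gamma_{n,b,s}; terms with coefficient zero are omitted.\<close>
fun Gam :: "nat \<Rightarrow> nat \<Rightarrow> nat \<Rightarrow> real mat" where
  "Gam n 0 s = mat 1 1 (\<lambda>_. 1)"
| "Gam n (Suc b) s =
     (if s = 0 then (1 - real s / real n) \<cdot>\<^sub>m kron (1\<^sub>m 2) (Gam (n - 1) b s)
      else if s = n then (real s / real n) \<cdot>\<^sub>m kron GammaM (Gam (n - 1) b (s - 1))
      else (real s / real n) \<cdot>\<^sub>m kron GammaM (Gam (n - 1) b (s - 1))
           + (1 - real s / real n) \<cdot>\<^sub>m kron (1\<^sub>m 2) (Gam (n - 1) b s))"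

text \<open>The vectors a_b (as lists); avec 0 = [0] makes avec 1 = [0,1].\<close>
fun avec :: "nat \<Rightarrow> nat list" where
  "avec 0 = [0]"
| "avec (Suc b) = avec b @ map Suc (avec b)"

text \<open>a_k (1-based), read from a_k itself (length 2^k >= k).\<close>
definition aent :: "nat \<Rightarrow> nat" where
  "aent k = avec k ! (k - 1)"

definition diagm :: "real list \<Rightarrow> real mat" where
  "diagm xs = mat (length xs) (length xs) (\<lambda>(i, j). if i = j then xs ! i else 0)"

end

theory Submission imports Defs begin

lemma length_avec[simp]: "length (avec b) = 2^b"
  by (induction b) auto

lemma avec_nth_Suc: "i < 2^(Suc b) \<Longrightarrow> avec (Suc b) ! i = (if i < 2^b then avec b ! i else Suc (avec b ! (i - 2^b)))"
  by (auto simp: nth_append)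

lemma avec_le: "i < 2^b \<Longrightarrow> avec b ! i \<le> b"
proof (induction b arbitrary: i)
  case 0 then show ?case by simp
next
  case (Suc b)
  show ?case
  proof (cases "i < 2^b")
    case True then show ?thesis using Suc.IH[of i] by (simp add: nth_append)
  next
    case False
    then have "i - 2^b < 2^b" using Suc.prems by simp
    then show ?thesis using False Suc.IH[of "i - 2^b"] by (simp add: nth_append)
  qed
qed

lemma avec_prefix: "m \<le> b \<Longrightarrow> i < 2^m \<Longrightarrow> avec b ! i = avec m ! i"
proof (induction b)
  case 0 then show ?case by simp
next
  case (Suc b)
  show ?case
  proof (cases "m = Suc b")
    case False
    then have "m \<le> b" using Suc by simp
    then have "i < 2^b" using Suc.prems by (meson less_le_trans one_le_numeral power_increasing)
    then show ?thesis using Suc \<open>m \<le> b\<close> by (simp add: nth_append)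
  qed simp
qed

lemma aent_eq: "i < 2^b \<Longrightarrow> aent (Suc i) = avec b ! i"
proof -
  assume a: "i < 2^b"
  define m where "m = min (Suc i) b"
  have "i < 2^i" by (rule less_exp)
  then have "i < 2*2^i" by linarith
  then have "i < 2^Suc i" by simp
  then have im: "i < 2^m" using a by (simp add: m_def min_def)
  have "aent (Suc i) = avec (Suc i) ! i" by (simp add: aent_def)
  also have "\<dots> = avec m ! i" using avec_prefix[OF _ im, of "Suc i"] by (simp add: m_def)
  also have "\<dots> = avec b ! i" using avec_prefix[OF _ im, of b] by (simp add: m_def)
  finally show ?thesis .
qed

lemma falling_0[simp]: "falling m 0 = 1" by (simp add: falling_def)

lemma falling_Suc: "falling m (Suc t) = falling m t * (real m - real t)"
  by (simp add: falling_def)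

lemma falling_Suc': "falling m (Suc t) = real m * falling (m - 1) t"
proof (cases m)
  case 0 then show ?thesis unfolding falling_def prod.lessThan_Suc_shift by simp
next
  case (Suc k)
  then show ?thesis unfolding falling_def prod.lessThan_Suc_shift
    by (simp add: algebra_simps)
qed

lemma falling_pos: "t \<le> m \<Longrightarrow> falling m t > 0"
  unfolding falling_def by (intro prod_pos) auto

lemma falling_zero0: "t > 0 \<Longrightarrow> falling 0 t = 0"
  by (cases t) (simp_all add: falling_Suc')

lemma term1:
  assumes "t < n"
  shows "real s / real n * (falling (s-1) t / falling (n-1) t) + (1 - real s / real n) * (falling s t / falling (n-1) t)
     = falling s t / falling n t"
proof (cases "s = 0")
  case True
  then show ?thesis
    by (cases "t = 0") (simp_all add: falling_zero0)
next
  case False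
  have h1: "real s * falling (s-1) t = falling s t * (real s - real t)"
    using falling_Suc[of s t] falling_Suc'[of s t] by simp
  have h2: "real n * falling (n-1) t = falling n t * (real n - real t)"
    using falling_Suc[of n t] falling_Suc'[of n t] by simp
  have p1: "falling (n-1) t > 0" using assms by (intro falling_pos) simp
  have p2: "falling n t > 0" using assms by (intro falling_pos) simp
  have n0: "real n > 0" "real n - real t > 0" using assms by auto
  have "real s / real n * (falling (s-1) t / falling (n-1) t) + (1 - real s / real n) * (falling s t / falling (n-1) t)
      = (real s * falling (s-1) t + (real n - real s) * falling s t) / (real n * falling (n-1) t)"
    using n0 p1 by (simp add: field_simps)
  also have "\<dots> = (falling s t * (real n - real t)) / (falling n t * (real n - real t))"
    unfolding h1 h2 by (simp add: algebra_simps)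
  also have "\<dots> = falling s t / falling n t" using n0 by simp
  finally show ?thesis .
qed

lemma lam_id1:
  assumes "a < n"
  shows "lam n a s = real s / real n * lam (n-1) a (s-1) + (1 - real s / real n) * lam (n-1) a s"
  unfolding lam_def sum_distrib_left sum.distrib[symmetric]
proof (rule sum.cong[OF refl])
  fix t assume "t \<in> {0..a}"
  then have "t < n" using assms by auto
  have gen: "\<And>A B C c p q::real. A = p*B + q*C \<Longrightarrow> c*A = p*(c*B) + q*(c*C)" by (simp add: algebra_simps)
  have eq: "falling s t / falling n t = real s / real n * (falling (s-1) t / falling (n-1) t) + (1 - real s / real n) * (falling s t / falling (n-1) t)"
    using term1[OF \<open>t < n\<close>, where s=s] by simp
  from gen[OF eq, of "real (a choose t) * (- 2) ^ t"] show "real (a choose t) * (- 2) ^ t * (falling s t / falling n t) =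
         real s / real n * (real (a choose t) * (- 2) ^ t * (falling (s - 1) t / falling (n - 1) t)) +
         (1 - real s / real n) * (real (a choose t) * (- 2) ^ t * (falling s t / falling (n - 1) t))"
    by (simp only: mult.assoc)
qed

lemma lam_ext: "a \<le> N \<Longrightarrow> lam n a s = (\<Sum>t\<le>N. real (a choose t) * (-2) ^ t * (falling s t / falling n t))"
  unfolding lam_def atLeast0AtMost
  by (rule sum.mono_neutral_left) auto

lemma lam_id2:
  shows "lam n (Suc a) s = lam n a s - 2 * (real s / real n) * lam (n-1) a (s-1)"
proof -
  define h where "h b t = real (b choose t) * (-2) ^ t * (falling s t / falling n t)" for b t
  have q: "falling s (Suc t) / falling n (Suc t) = real s / real n * (falling (s-1) t / falling (n-1) t)" for t
    unfolding falling_Suc' by simp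
  have "lam n (Suc a) s = (\<Sum>t\<le>Suc a. h (Suc a) t)" unfolding h_def by (rule lam_ext) simp
  also have "\<dots> = h (Suc a) 0 + (\<Sum>t\<le>a. h (Suc a) (Suc t))" by (rule sum.atMost_Suc_shift)
  also have "\<dots> = h a 0 + (\<Sum>t\<le>a. h a (Suc t)) + (\<Sum>t\<le>a. real (a choose t) * (-2) ^ Suc t * (falling s (Suc t) / falling n (Suc t)))"
  proof -
    have hs: "h (Suc a) (Suc t) = h a (Suc t) + real (a choose t) * (-2) ^ Suc t * (falling s (Suc t) / falling n (Suc t))" for t
      unfolding h_def binomial_Suc_Suc of_nat_add by (simp add: algebra_simps)
    show ?thesis by (simp only: hs sum.distrib) (simp add: h_def)
  qed
  also have "h a 0 + (\<Sum>t\<le>a. h a (Suc t)) = lam n a s"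
    using sum.atMost_Suc_shift[of "h a" a, symmetric] lam_ext[of a "Suc a" n s] unfolding h_def by simp
  also have "(\<Sum>t\<le>a. real (a choose t) * (-2) ^ Suc t * (falling s (Suc t) / falling n (Suc t)))
     = - 2 * (real s / real n) * lam (n-1) a (s-1)"
    unfolding q lam_def atLeast0AtMost sum_distrib_left by (rule sum.cong) (simp_all add: algebra_simps)
  finally show ?thesis by simp
qed

lemma lam_id2':
  assumes "a < n"
  shows "lam n (Suc a) s = real s / real n * (-1) * lam (n-1) a (s-1) + (1 - real s / real n) * lam (n-1) a s"
  using lam_id2[of n a s] lam_id1[OF assms, of s] by simp


lemma kron_diag:
  assumes "m > 0"
  shows "kron (mat 2 2 (\<lambda>(i,j). if i=j then c i else 0)) (mat m m (\<lambda>(i,j). if i=j then g i else 0))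
    = mat (2*m) (2*m) (\<lambda>(i,j). if i=j then c (i div m) * g (i mod m) else 0)"
proof -
  have ne: "\<And>i j. i \<noteq> j \<Longrightarrow> i div m \<noteq> j div m \<or> i mod m \<noteq> j mod m" by (metis div_mult_mod_eq)
  have di: "\<And>i. i < 2*m \<Longrightarrow> i div m < 2" by (simp add: less_mult_imp_div_less)
  have mi: "\<And>i. i mod m < m" using assms by auto
  show ?thesis unfolding kron_def
    by (intro eq_matI) (use ne di mi in auto)
qed

lemma one2: "(1\<^sub>m 2 :: real mat) = mat 2 2 (\<lambda>(i,j). if i=j then (\<lambda>i. 1) i else 0)"
  unfolding one_mat_def by simp

lemma Gamma2: "GammaM = mat 2 2 (\<lambda>(i,j). if i=j then (\<lambda>i. if i = 0 then 1 else -1) i else 0)"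
  unfolding GammaM_def by simp

lemma entry:
  assumes "Suc b \<le> n" "i < 2 * 2^b"
  shows "lam n (avec (Suc b) ! i) s = real s / real n * (if i div 2^b = 0 then 1 else -1) * lam (n-1) (avec b ! (i mod 2^b)) (s-1)
      + (1 - real s / real n) * lam (n-1) (avec b ! (i mod 2^b)) s"
proof -
  define a where "a = avec b ! (i mod 2^b)"
  have "a \<le> b" unfolding a_def by (rule avec_le) simp
  then have an: "a < n" using assms by simp
  show ?thesis
  proof (cases "i < 2^b")
    case True
    then have "avec (Suc b) ! i = a" "i div 2^b = 0" "i mod 2^b = i" using assms by (auto simp: avec_nth_Suc a_def nth_append)
    then show ?thesis using lam_id1[OF an, of s] by (simp add: a_def)
  next
    case False
    then have "i div 2^b = 1" using assms by (simp add: le_div_geq)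
    moreover have "i mod 2^b = i - 2^b" using False assms by (simp add: le_mod_geq)
    moreover have "avec (Suc b) ! i = Suc (avec b ! (i - 2^b))" using False assms by (simp add: nth_append)
    ultimately show ?thesis using lam_id2'[OF an, of s] by (simp add: a_def)
  qed
qed

lemma Gam_diag:
  "b \<le> n \<Longrightarrow> s \<le> n \<Longrightarrow> Gam n b s = mat (2^b) (2^b) (\<lambda>(i,j). if i=j then lam n (avec b ! i) s else 0)"
proof (induction b arbitrary: n s)
  case 0
  have "lam n 0 s = 1" by (simp add: lam_def)
  then show ?case by (intro eq_matI) auto
next
  case (Suc b)
  let ?N = "n - 1"
  define E where "E s' = mat (2^b) (2^b) (\<lambda>(i,j). if i=j then lam ?N (avec b ! i) s' else 0)" for s'
  have KG: "kron GammaM (E s') = mat (2*2^b) (2*2^b) (\<lambda>(i,j). if i=j then (if i div 2^b = 0 then 1 else -1) * lam ?N (avec b ! (i mod 2^b)) s' else 0)" for s'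
    unfolding Gamma2 E_def by (rule kron_diag) simp
  have KI: "kron (1\<^sub>m 2) (E s') = mat (2*2^b) (2*2^b) (\<lambda>(i,j). if i=j then lam ?N (avec b ! (i mod 2^b)) s' else 0)" for s'
    unfolding one2 E_def by (subst kron_diag) (simp, intro eq_matI, auto)
  have IH1: "s \<ge> 1 \<Longrightarrow> Gam ?N b (s-1) = E (s-1)" unfolding E_def using Suc by (intro Suc.IH) auto
  have IH2: "s < n \<Longrightarrow> Gam ?N b s = E s" unfolding E_def using Suc by (intro Suc.IH) auto
  have n0: "n > 0" using Suc by simp
  have ent: "\<And>i. i < 2*2^b \<Longrightarrow> lam n (avec (Suc b) ! i) s = real s / real n * (if i div 2^b = 0 then 1 else -1) * lam ?N (avec b ! (i mod 2^b)) (s-1)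
      + (1 - real s / real n) * lam ?N (avec b ! (i mod 2^b)) s" using entry Suc.prems by blast
  show ?case
  proof (cases "s = 0")
    case True
    then show ?thesis using IH2 n0 KI ent by (intro eq_matI) auto
  next
    case s0: False
    show ?thesis
    proof (cases "s = n")
      case True
      then show ?thesis using IH1 s0 n0 KG ent by (intro eq_matI) auto
    next
      case False
      then have "s < n" using Suc by simp
      then show ?thesis using IH1 IH2 s0 False n0 KG KI ent by (intro eq_matI) auto
    qed
  qed
qed


lemma mapL: "map f [1..<m+1] = map (\<lambda>i. f (Suc i)) [0..<m]"
proof -
  have "[1..<m+1] = map Suc [0..<m]" by (simp add: map_Suc_upt)
  then show ?thesis by simp
qed

lemma diagm_L: "diagm (map (\<lambda>k. lam n (aent k) s) [1..<2 ^ b + 1]) = mat (2^b) (2^b) (\<lambda>(i,j). if i=j then lam n (avec b ! i) s else 0)"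
  unfolding mapL diagm_def by (intro eq_matI) (auto simp: aent_eq)

theorem lemma4p1:
  fixes n b s :: nat
  assumes "b \<le> n" and "s \<le> n"
  shows "Gam n b s = diagm (map (\<lambda>k. lam n (aent k) s) [1..<2 ^ b + 1])
    \<and> (b \<ge> 1 \<longrightarrow>
        Gam n b s =
          diagm (map (\<lambda>k. lam n (aent k) s) [1..<2 ^ (b - 1) + 1] @ replicate (2 ^ (b - 1)) 0)
        + diagm (replicate (2 ^ (b - 1)) 0 @ map (\<lambda>k. lam n (aent k + 1) s) [1..<2 ^ (b - 1) + 1]))"
proof (intro conjI impI)
  show G: "Gam n b s = diagm (map (\<lambda>k. lam n (aent k) s) [1..<2 ^ b + 1])"
    unfolding Gam_diag[OF assms] diagm_L ..
  assume "b \<ge> 1"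
  then obtain c where bc: "b = Suc c" by (cases b) auto
  have e1: "\<And>i. i < 2^c \<Longrightarrow> aent (Suc i) = avec c ! i" by (rule aent_eq)
  have e2: "\<And>i. i < 2 * 2^c \<Longrightarrow> avec (Suc c) ! i = (if i < 2^c then avec c ! i else Suc (avec c ! (i - 2^c)))"
    using avec_nth_Suc by simp
  show "Gam n b s =
          diagm (map (\<lambda>k. lam n (aent k) s) [1..<2 ^ (b - 1) + 1] @ replicate (2 ^ (b - 1)) 0)
        + diagm (replicate (2 ^ (b - 1)) 0 @ map (\<lambda>k. lam n (aent k + 1) s) [1..<2 ^ (b - 1) + 1])"
    unfolding Gam_diag[OF assms] mapL unfolding bc diagm_def
    by (intro eq_matI) (auto simp: nth_append e1 e2)
qed

end
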